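(* Let $C_n=\frac{1}{n+1}\binom{2n}{n}$ be the Catalan numbers. Then for every even integer $n\ge2$, $$C_n=\frac{1}{4n}\sum_{h=0}^{n-2}\binom{n}{h}(-1)^h4^{n-h}C_{h+1},$$ and for every odd integer $n\ge1$, $$C_{n+1}=\frac12\sum_{h=0}^{n-1}\binom{n}{h}(-1)^h4^{n-h}C_{h+1}.$$ *)

theory Defs
  imports Complex_Main
begin

definition catalan :: "nat \<Rightarrow> real" where
  "catalan n = real ((2*n) choose n) / real (n + 1)"

end

theory Submission
  imports Defs "HOL-Computational_Algebra.Formal_Power_Series"
begin

lemma cat_fact: "catalan k = fact (2*k) / (fact k * fact k * real (k+1))"
  unfolding catalan_def by (simp add: binomial_fact mult_2)

lemma aux: fixes F G x :: real assumes "F > 0" "G > 0" "x \<ge> 0"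
  shows "F * ((2*x + 1) * (2*x+2)) / (G * G * ((x+1) * (x+1) * (x+2))) * (x+2) = F / (G*G*(x+1)) * 2 * (2*x+1)"
proof -
  have a: "x + 1 \<noteq> 0" "x + 2 \<noteq> 0" "1 + x \<noteq> 0" "2 + x \<noteq> 0" "G \<noteq> 0" using assms by auto
  have "F * ((2*x + 1) * (2*x+2)) / (G * G * ((x+1) * (x+1) * (x+2))) * (x+2)
     = (F * (2*x + 1) * 2) * ((x+1) * (x+2)) / ((G * G * (x+1)) * ((x+1) * (x+2)))"
    by (simp add: algebra_simps)
  also have "\<dots> = (F * (2*x + 1) * 2) / (G * G * (x+1))"
    using a by (subst mult_divide_mult_cancel_right) auto
  finally show ?thesis by (simp add: algebra_simps)
qed

lemma cat_rec: "catalan (Suc k) * real (k+2) = catalan k * 2 * (2 * real k + 1)"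
proof -
  have e: "2 * Suc k = Suc (Suc (2*k))" by simp
  have F: "fact (2*k) > (0::real)" "fact k > (0::real)" by simp_all
  have c1: "catalan (Suc k) = fact (2*k) * ((2*real k + 1) * (2*real k+2)) / (fact k * fact k * ((real k+1) * (real k+1) * (real k+2)))"
    unfolding cat_fact e by (simp add: fact_Suc algebra_simps)
  have c2: "catalan k = fact (2*k) / (fact k * fact k * (real k+1))"
    unfolding cat_fact by simp
  have c3: "real (k+2) = real k + 2" by simp
  show ?thesis unfolding c1 c2 c3 by (rule aux) (use F in auto)
qed

lemma g_rec: "((a::real) gchoose Suc k) = (a gchoose k) * (a - real k) / real (Suc k)"
proof -
  have "fact (Suc k) * (a gchoose Suc k) = (\<Prod>i = 0..<Suc k. a - of_nat i)"
    by (rule gbinomial_mult_fact)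
  also have "\<dots> = (\<Prod>i = 0..<k. a - of_nat i) * (a - real k)" by simp
  also have "\<dots> = fact k * (a gchoose k) * (a - real k)" by (simp add: gbinomial_mult_fact)
  finally have "fact k * ((a gchoose Suc k) * real (Suc k)) = fact k * ((a gchoose k) * (a - real k))"
    by (simp add: fact_Suc algebra_simps)
  then have "(a gchoose Suc k) * real (Suc k) = (a gchoose k) * (a - real k)" by simp
  then show ?thesis by (simp add: field_simps del: of_nat_Suc)
qed

lemma cat_g: "catalan k = -(1/2) * (-4)^(k+1) * ((1/2::real) gchoose (k+1))"
proof (induction k)
  case 0
  then show ?case by (simp add: catalan_def)
next
  case (Suc k)
  define G where "G = ((1/2::real) gchoose (k+1))"
  have r: "((1/2::real) gchoose (Suc k+1)) = G * (1/2 - real (k+1)) / real (k+2)"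
    using g_rec[of "1/2" "k+1"] by (simp add: G_def)
  have p: "(-4::real)^(Suc k+1) = -4 * (-4)^(k+1)" by simp
  have k2: "real (k+2) \<noteq> 0" by simp
  have "catalan (Suc k) = catalan k * 2 * (2 * real k + 1) / real (k+2)"
    using cat_rec[of k] k2 by (simp add: field_simps)
  also have "\<dots> = -(1/2) * (-4)^(Suc k+1) * ((1/2::real) gchoose (Suc k+1))"
    unfolding Suc r p G_def[symmetric] using k2 by (simp add: field_simps)
  finally show ?case .
qed

lemma term_eq:
  assumes "h \<le> n"
  shows "real (n choose h) * (-1) ^ h * 4 ^ (n - h) * catalan (h + 1)
       = -8 * 4^n * (real (n choose h) * ((1/2::real) gchoose (h+2)))"
proof -
  have a: "\<And>m. (-4::real)^m = (-1)^m * 4^m"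
    by (simp add: power_mult_distrib[symmetric])
  have b: "(4::real)^(n-h) * 4^h = 4^n" using assms by (simp add: power_add[symmetric])
  have c: "((-1::real)^h) * (-1)^h = 1" by (simp add: power_add[symmetric] flip: power_mult_distrib)
  have "real (n choose h) * (-1) ^ h * 4 ^ (n - h) * catalan (h + 1)
      = -8 * (real (n choose h) * ((1/2::real) gchoose (h+2))) * (((-1::real)^h) * (-1)^h) * ((4::real)^(n-h) * 4^h)"
    unfolding cat_g[of "h+1"] a by (simp add: power_add algebra_simps)
  then show ?thesis unfolding b c by simp
qed

lemma full:
  "(\<Sum>h=0..n. real (n choose h) * (-1) ^ h * 4 ^ (n - h) * catalan (h + 1)) = catalan (n+1)"
proof -
  define G where "G = (\<lambda>j. (1/2::real) gchoose j)"
  have "(\<Sum>h=0..n. real (n choose h) * (-1) ^ h * 4 ^ (n - h) * catalan (h + 1))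
      = (\<Sum>h=0..n. -8 * 4^n * (real (n choose h) * G (h+2)))"
    by (intro sum.cong refl, subst term_eq) (auto simp: G_def)
  also have "\<dots> = -8 * 4^n * (\<Sum>h=0..n. real (n choose h) * G (h+2))"
    by (simp add: sum_distrib_left)
  also have "(\<Sum>h=0..n. real (n choose h) * G (h+2)) = (1/2 + real n) gchoose (n+2)"
  proof -
    have V: "(\<Sum>k=0..Suc (Suc n). G k * (real n gchoose (Suc (Suc n) - k))) = (1/2 + real n) gchoose (Suc (Suc n))"
      unfolding G_def by (rule gbinomial_Vandermonde)
    have "(\<Sum>k=0..Suc (Suc n). G k * (real n gchoose (Suc (Suc n) - k)))
        = G 0 * (real n gchoose Suc (Suc n)) + (G 1 * (real n gchoose Suc n) +
          (\<Sum>h=0..n. G (h+2) * (real n gchoose (n - h))))"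
      apply (subst sum.atLeast0_atMost_Suc_shift)
      apply (subst sum.atLeast0_atMost_Suc_shift)
      by (simp add: numeral_2_eq_2 del: sum.atLeast0_atMost_Suc)
    also have "\<dots> = (\<Sum>h=0..n. G (h+2) * (real n gchoose (n - h)))"
      by (simp add: binomial_gbinomial[symmetric] binomial_eq_0)
    also have "\<dots> = (\<Sum>h=0..n. real (n choose h) * G (h+2))"
      by (rule sum.cong) (auto simp: binomial_gbinomial[symmetric] binomial_symmetric[symmetric])
    finally show ?thesis using V by (simp add: numeral_2_eq_2)
  qed
  also have "(1/2 + real n) gchoose (n+2) = (-1)^n * G (n+2)"
  proof -
    have "(1/2 + real n) gchoose (n+2) = (-1)^(n+2) * ((real (n+2) - (1/2 + real n) - 1) gchoose (n+2))"
      by (rule gbinomial_negated_upper)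
    also have "real (n+2) - (1/2 + real n) - 1 = 1/2" by simp
    finally show ?thesis by (simp add: G_def)
  qed
  also have "catalan (n+1) = -8 * 4^n * ((-1)^n * G (n+2))"
    unfolding cat_g[of "n+1"] G_def by (simp add: power_add power_mult_distrib[symmetric])
  ultimately show ?thesis by simp
qed

theorem mainTheorem12:
  shows "(\<forall>n::nat. even n \<and> n \<ge> 2 \<longrightarrow>
            catalan n = (1 / (4 * real n)) *
              (\<Sum>h=0..n-2. real (n choose h) * (-1) ^ h * 4 ^ (n - h) * catalan (h + 1)))
       \<and> (\<forall>n::nat. odd n \<longrightarrow>
            catalan (n + 1) = (1 / 2) *
              (\<Sum>h=0..n-1. real (n choose h) * (-1) ^ h * 4 ^ (n - h) * catalan (h + 1)))"
proof (intro conjI allI impI)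
  fix n :: nat
  assume A: "even n \<and> n \<ge> 2"
  then obtain m where n: "n = Suc (Suc m)" by (metis add_2_eq_Suc le_Suc_ex)
  have em: "even m" using A n by simp
  have f: "(\<Sum>h=0..Suc (Suc m). real (n choose h) * (-1) ^ h * 4 ^ (n - h) * catalan (h + 1)) = catalan (n+1)"
    using full[of n] n by simp
  have "(\<Sum>h=0..Suc (Suc m). real (n choose h) * (-1) ^ h * 4 ^ (n - h) * catalan (h + 1))
     = (\<Sum>h=0..m. real (n choose h) * (-1) ^ h * 4 ^ (n - h) * catalan (h + 1))
       - 4 * real n * catalan n + catalan (n+1)"
    using em n by (simp add: binomial_symmetric[of 1 n, simplified] algebra_simps)
  with f have "(\<Sum>h=0..m. real (n choose h) * (-1) ^ h * 4 ^ (n - h) * catalan (h + 1)) = 4 * real n * catalan n"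
    by simp
  moreover have "n - 2 = m" using n by simp
  moreover have "real n > 0" using n by simp
  ultimately show "catalan n = (1 / (4 * real n)) *
              (\<Sum>h=0..n-2. real (n choose h) * (-1) ^ h * 4 ^ (n - h) * catalan (h + 1))"
    by simp
next
  fix n :: nat
  assume A: "odd n"
  then obtain m where n: "n = Suc m" by (cases n) auto
  have em: "even m" using A n by simp
  have f: "(\<Sum>h=0..Suc m. real (n choose h) * (-1) ^ h * 4 ^ (n - h) * catalan (h + 1)) = catalan (n+1)"
    using full[of n] n by simp
  have "(\<Sum>h=0..Suc m. real (n choose h) * (-1) ^ h * 4 ^ (n - h) * catalan (h + 1))
     = (\<Sum>h=0..m. real (n choose h) * (-1) ^ h * 4 ^ (n - h) * catalan (h + 1)) - catalan (n+1)"
    using em n by simp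
  with f have "(\<Sum>h=0..m. real (n choose h) * (-1) ^ h * 4 ^ (n - h) * catalan (h + 1)) = 2 * catalan (n+1)"
    by simp
  moreover have "n - 1 = m" using n by simp
  ultimately show "catalan (n + 1) = (1 / 2) *
              (\<Sum>h=0..n-1. real (n choose h) * (-1) ^ h * 4 ^ (n - h) * catalan (h + 1))"
    by simp
qed

end
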